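(* Let $\mathcal C$ be a two-sided quaternionic Hilbert space whose inner product satisfies $\langle c,qd\rangle_{\mathcal C}=\langle \overline{q}c,d\rangle_{\mathcal C}$ for all $c,d\in\mathcal C$ and $q\in\mathbb H$. Let $0<r<r_0<1$ and $R=1/r$, and let $\Phi(p)=\sum_{u=0}^\infty p^u\Phi_u$ ($\Phi_u\in\mathbf L(\mathcal C,\mathcal C)$) be an $\mathbf L(\mathcal C,\mathcal C)$-valued left slice hyperholomorphic function in the ball $\mathbb B_{r_0}=\{p\in\mathbb H:|p|<r_0\}$, continuous on $\{|p|\le r_0\}$ in the operator topology. For $\mathbf f=(f_v)_{v\ge1}$ and $\mathbf g=(g_u)_{u\ge1}$ in $\ell_{2,r}(\mathbb N,\mathcal C)$ define \[ [\mathbf f,\mathbf g]_\Phi=\sum_{v=1}^\infty\sum_{u=1}^v \langle \Phi_{v-u}f_v,g_u\rangle_{\mathcal C}+\sum_{u=1}^\infty\sum_{v=1}^u \langle \Phi^*_{u-v}f_v,g_u\rangle_{\mathcal C}. \] Then the form $[\cdot,\cdot]_\Phi$ is jointly continuous on $\ell_{2,r}(\mathbb N,\mathcal C)\times \ell_{2,r}(\mathbb N,\mathcal C)$.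
   Context: $\mathbb H$ denotes the real quaternions. $\ell_{2,r}(\mathbb N,\mathcal C)$ is the space of sequences $\mathbf f=(f_1,f_2,\ldots)$ with $f_u\in\mathcal C$ and $\sum_{u=1}^\infty R^{2u}\|f_u\|_{\mathcal C}^2<\infty$, with norm $\|\mathbf f\|^2=\sum_{u\ge1}R^{2u}\|f_u\|^2_{\mathcal C}$. A function $f$ on an axially symmetric open set $\Omega\subset\mathbb H$ with values in a two-sided quaternionic Banach space is left slice hyperholomorphic if $f(x+Iy)=\alpha(x,y)+I\beta(x,y)$ for all $I$ in the unit sphere $\mathbb S$ of purely imaginary quaternions, where $\alpha,\beta$ are real differentiable, satisfy $\partial_x\alpha-\partial_y\beta=0$, $\partial_y\alpha+\partial_x\beta=0$, and $\alpha(x,-y)=\alpha(x,y)$, $\beta(x,-y)=-\beta(x,y)$; on a ball centered at $0$ this is equivalent to having a convergent expansion $\sum_u p^u\Phi_u$. *)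

theory Defs
  imports "HOL-Analysis.Analysis"
begin

section \<open>Quaternions, as pairs of complex numbers (Cayley--Dickson: (a,b) = a + b j)\<close>

text \<open>The norm on quat is the product norm of complex x complex, i.e. the Euclidean
  norm of R^4, which is the quaternionic modulus.\<close>

type_synonym quat = "complex \<times> complex"

definition qmul :: "quat \<Rightarrow> quat \<Rightarrow> quat" where
  "qmul p q = (fst p * fst q - snd p * cnj (snd q), fst p * snd q + snd p * cnj (fst q))"

definition qcnj :: "quat \<Rightarrow> quat" where
  "qcnj p = (cnj (fst p), - snd p)"

definition qone :: quat where
  "qone = (1, 0)"

definition qreal :: "real \<Rightarrow> quat" where
  "qreal x = (complex_of_real x, 0)"

definition qRe :: "quat \<Rightarrow> real" where
  "qRe p = Re (fst p)"

fun qpow :: "quat \<Rightarrow> nat \<Rightarrow> quat" where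
  "qpow p 0 = qone"
| "qpow p (Suc n) = qmul p (qpow p n)"

text \<open>lm = left scalar multiplication, rm = right scalar multiplication (rm a c = c a),
  ip = quaternion-valued inner product, right linear in the first argument:
  ip (c a) d = ip c d * a, hermitian, positive definite; complete for the induced norm.\<close>

definition cnorm :: "('c \<Rightarrow> 'c \<Rightarrow> quat) \<Rightarrow> 'c \<Rightarrow> real" where
  "cnorm ip c = sqrt (qRe (ip c c))"

definition two_sided_qhilbert ::
  "(quat \<Rightarrow> 'c::ab_group_add \<Rightarrow> 'c) \<Rightarrow> (quat \<Rightarrow> 'c \<Rightarrow> 'c) \<Rightarrow> ('c \<Rightarrow> 'c \<Rightarrow> quat) \<Rightarrow> bool" where
  "two_sided_qhilbert lm rm ip \<longleftrightarrow>
     (\<forall>q c d. lm q (c + d) = lm q c + lm q d) \<and>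
     (\<forall>p q c. lm (p + q) c = lm p c + lm q c) \<and>
     (\<forall>p q c. lm (qmul p q) c = lm p (lm q c)) \<and>
     (\<forall>c. lm qone c = c) \<and>
     (\<forall>q c d. rm q (c + d) = rm q c + rm q d) \<and>
     (\<forall>p q c. rm (p + q) c = rm p c + rm q c) \<and>
     (\<forall>p q c. rm (qmul p q) c = rm q (rm p c)) \<and>
     (\<forall>c. rm qone c = c) \<and>
     (\<forall>p q c. lm p (rm q c) = rm q (lm p c)) \<and>
     (\<forall>x c. lm (qreal x) c = rm (qreal x) c) \<and>
     (\<forall>c d e. ip (c + d) e = ip c e + ip d e) \<and>
     (\<forall>c d. ip c d = qcnj (ip d c)) \<and>
     (\<forall>c d a. ip (rm a c) d = qmul (ip c d) a) \<and>
     (\<forall>c. \<exists>t\<ge>0. ip c c = qreal t) \<and>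
     (\<forall>c. ip c c = 0 \<longrightarrow> c = 0) \<and>
     (\<forall>X :: nat \<Rightarrow> 'c. (\<forall>\<epsilon>>0. \<exists>N. \<forall>m\<ge>N. \<forall>n\<ge>N. cnorm ip (X m - X n) < \<epsilon>)
          \<longrightarrow> (\<exists>L. (\<lambda>n. cnorm ip (X n - L)) \<longlonglongrightarrow> 0))"

definition qbounded_op :: "(quat \<Rightarrow> 'c::ab_group_add \<Rightarrow> 'c) \<Rightarrow> ('c \<Rightarrow> 'c \<Rightarrow> quat) \<Rightarrow> ('c \<Rightarrow> 'c) \<Rightarrow> bool" where
  "qbounded_op rm ip T \<longleftrightarrow>
     (\<forall>c d. T (c + d) = T c + T d) \<and> (\<forall>c a. T (rm a c) = rm a (T c)) \<and>
     (\<exists>K. \<forall>c. cnorm ip (T c) \<le> K * cnorm ip c)"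

definition opnorm :: "('c \<Rightarrow> 'c \<Rightarrow> quat) \<Rightarrow> ('c \<Rightarrow> 'c) \<Rightarrow> real" where
  "opnorm ip T = (SUP c\<in>{c. cnorm ip c \<le> 1}. cnorm ip (T c))"

definition qadjoint :: "('c \<Rightarrow> 'c \<Rightarrow> quat) \<Rightarrow> ('c \<Rightarrow> 'c) \<Rightarrow> ('c \<Rightarrow> 'c)" where
  "qadjoint ip T = (THE S. \<forall>c d. ip (T c) d = ip c (S d))"

text \<open>Sequences are functions nat => 'c; only the indices u >= 1 matter.\<close>

definition l2r :: "('c \<Rightarrow> 'c \<Rightarrow> quat) \<Rightarrow> real \<Rightarrow> (nat \<Rightarrow> 'c) set" where
  "l2r ip R = {f. summable (\<lambda>u. R ^ (2 * Suc u) * (cnorm ip (f (Suc u)))\<^sup>2)}"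

definition l2r_norm :: "('c \<Rightarrow> 'c \<Rightarrow> quat) \<Rightarrow> real \<Rightarrow> (nat \<Rightarrow> 'c) \<Rightarrow> real" where
  "l2r_norm ip R f = sqrt (\<Sum>u. R ^ (2 * Suc u) * (cnorm ip (f (Suc u)))\<^sup>2)"

definition form_part1 :: "('c \<Rightarrow> 'c \<Rightarrow> quat) \<Rightarrow> (nat \<Rightarrow> 'c \<Rightarrow> 'c) \<Rightarrow> (nat \<Rightarrow> 'c) \<Rightarrow> (nat \<Rightarrow> 'c) \<Rightarrow> nat \<Rightarrow> quat" where
  "form_part1 ip \<Phi> f g v = (\<Sum>u=1..v. ip (\<Phi> (v - u) (f v)) (g u))"

definition form_part2 :: "('c \<Rightarrow> 'c \<Rightarrow> quat) \<Rightarrow> (nat \<Rightarrow> 'c \<Rightarrow> 'c) \<Rightarrow> (nat \<Rightarrow> 'c) \<Rightarrow> (nat \<Rightarrow> 'c) \<Rightarrow> nat \<Rightarrow> quat" where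
  "form_part2 ip \<Phi> f g u = (\<Sum>v=1..u. ip (qadjoint ip (\<Phi> (u - v)) (f v)) (g u))"

definition phi_form :: "('c \<Rightarrow> 'c \<Rightarrow> quat) \<Rightarrow> (nat \<Rightarrow> 'c \<Rightarrow> 'c) \<Rightarrow> (nat \<Rightarrow> 'c) \<Rightarrow> (nat \<Rightarrow> 'c) \<Rightarrow> quat" where
  "phi_form ip \<Phi> f g = (\<Sum>v. form_part1 ip \<Phi> f g v) + (\<Sum>u. form_part2 ip \<Phi> f g u)"

end

theory Submission
  imports Defs
begin


lemma norm_quat: "norm (p::quat) = sqrt ((cmod (fst p))^2 + (cmod (snd p))^2)"
  by (simp add: norm_prod_def)

lemma qmul_qcnj_self: "qmul p (qcnj p) = qreal ((norm p)^2)"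
  by (cases p) (simp add: qmul_def qcnj_def qreal_def norm_quat complex_eq_iff cmod_power2; simp add: power2_eq_square algebra_simps)

lemma qmul_qcnj_self2: "qmul (qcnj p) p = qreal ((norm p)^2)"
  by (cases p) (simp add: qmul_def qcnj_def qreal_def norm_quat complex_eq_iff cmod_power2; simp add: power2_eq_square algebra_simps)

lemma norm_qmul_sq: "(norm (qmul p q))^2 = (norm p)^2 * (norm q)^2"
  by (cases p; cases q) (simp add: qmul_def norm_quat cmod_power2; simp add: power2_eq_square algebra_simps)

lemma norm_qmul: "norm (qmul p q) = norm p * norm q"
  by (metis norm_qmul_sq norm_ge_zero power_mult_distrib power2_eq_imp_eq zero_le_mult_iff)

lemma qcnj_qcnj[simp]: "qcnj (qcnj p) = p" by (simp add: qcnj_def)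
lemma qcnj_qmul: "qcnj (qmul p q) = qmul (qcnj q) (qcnj p)"
  by (simp add: qcnj_def qmul_def algebra_simps)
lemma qcnj_add: "qcnj (p + q) = qcnj p + qcnj q" by (simp add: qcnj_def)
lemma qcnj_zero[simp]: "qcnj 0 = 0" by (simp add: qcnj_def zero_prod_def)
lemma qcnj_minus: "qcnj (- p) = - qcnj p" by (simp add: qcnj_def)
lemma qcnj_diff: "qcnj (p - q) = qcnj p - qcnj q" by (simp add: qcnj_def)
lemma norm_qcnj[simp]: "norm (qcnj p) = norm p" by (simp add: qcnj_def norm_quat)
lemma qmul_add_left: "qmul (p + q) a = qmul p a + qmul q a" by (simp add: qmul_def algebra_simps)
lemma qmul_add_right: "qmul a (p + q) = qmul a p + qmul a q" by (simp add: qmul_def algebra_simps)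
lemma qmul_zero_left[simp]: "qmul 0 a = 0" by (simp add: qmul_def zero_prod_def)
lemma qmul_zero_right[simp]: "qmul a 0 = 0" by (simp add: qmul_def zero_prod_def)
lemma qmul_qreal_right: "qmul p (qreal s) = s *\<^sub>R p"
  by (cases p) (simp add: qmul_def qreal_def scaleR_prod_def scaleR_conv_of_real)
lemma qmul_qreal_left: "qmul (qreal s) p = s *\<^sub>R p"
  by (cases p) (simp add: qmul_def qreal_def scaleR_prod_def scaleR_conv_of_real)
lemma qmul_qreal_qreal: "qmul (qreal a) (qreal b) = qreal (a * b)"
  by (simp add: qmul_def qreal_def)
lemma qreal_add: "qreal (a + b) = qreal a + qreal b" by (simp add: qreal_def)
lemma qreal_one: "qreal 1 = qone" by (simp add: qreal_def qone_def)
lemma qreal_zero[simp]: "qreal 0 = 0" by (simp add: qreal_def zero_prod_def)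
lemma qRe_qreal[simp]: "qRe (qreal s) = s" by (simp add: qRe_def qreal_def)
lemma norm_qreal[simp]: "norm (qreal s) = \<bar>s\<bar>" by (simp add: qreal_def norm_quat)
lemma qcnj_qreal[simp]: "qcnj (qreal s) = qreal s" by (simp add: qreal_def qcnj_def)
lemma qRe_add: "qRe (p + q) = qRe p + qRe q" by (simp add: qRe_def)
lemma qRe_diff: "qRe (p - q) = qRe p - qRe q" by (simp add: qRe_def)
lemma qRe_minus: "qRe (- p) = - qRe p" by (simp add: qRe_def)
lemma qRe_zero[simp]: "qRe 0 = 0" by (simp add: qRe_def)
lemma qRe_scaleR: "qRe (s *\<^sub>R p) = s * qRe p" by (simp add: qRe_def)
lemma qRe_qcnj: "qRe (qcnj p) = qRe p" by (simp add: qRe_def qcnj_def)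
lemma qRe_le_norm: "\<bar>qRe p\<bar> \<le> norm p"
  unfolding qRe_def norm_quat
  by (metis abs_Re_le_cmod norm_ge_zero order_trans power_mono real_le_rsqrt le_add_same_cancel1 zero_le_power2 real_sqrt_abs)
lemma qRe_qmul_comm: "qRe (qmul p q) = qRe (qmul q p)"
  by (simp add: qRe_def qmul_def)
lemma qpow_qreal: "qpow (qreal t) n = qreal (t ^ n)"
  by (induct n) (simp_all add: qreal_one qmul_qreal_qreal)
lemma qRe_qmul_qcnj_scale: "qRe (qmul (qcnj (s *\<^sub>R q)) q) = s * (norm q)^2"
  by (cases q) (simp add: qmul_def qcnj_def qRe_def norm_quat cmod_power2; simp add: power2_eq_square algebra_simps)
lemma qRe_qmul_qcnj_scale2: "qRe (qmul (qcnj q) (s *\<^sub>R q)) = s * (norm q)^2"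
  by (cases q) (simp add: qmul_def qcnj_def qRe_def norm_quat cmod_power2; simp add: power2_eq_square algebra_simps)
lemma qmul_assoc: "qmul (qmul p q) a = qmul p (qmul q a)"
  by (simp add: qmul_def algebra_simps)
lemma qmul_minus_left: "qmul (- p) a = - qmul p a" by (simp add: qmul_def)
lemma qmul_minus_right: "qmul a (- p) = - qmul a p" by (simp add: qmul_def)
lemma qmul_diff_left: "qmul (p - q) a = qmul p a - qmul q a" by (simp add: qmul_def algebra_simps)
lemma qmul_diff_right: "qmul a (p - q) = qmul a p - qmul a q" by (simp add: qmul_def algebra_simps)
lemma qmul_scaleR_left: "qmul (s *\<^sub>R p) q = s *\<^sub>R qmul p q" by (simp add: qmul_def algebra_simps scaleR_conv_of_real)
lemma scaleR_qreal: "s *\<^sub>R qreal t = qreal (s * t)" by (simp add: qreal_def scaleR_conv_of_real)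


locale qh =
  fixes lm rm :: "quat \<Rightarrow> 'c::ab_group_add \<Rightarrow> 'c" and ip :: "'c \<Rightarrow> 'c \<Rightarrow> quat"
  assumes H: "two_sided_qhilbert lm rm ip"
begin

lemmas HH = H[unfolded two_sided_qhilbert_def]

lemma rm_add: "rm q (c + d) = rm q c + rm q d" using HH[THEN conjunct2, THEN conjunct2, THEN conjunct2, THEN conjunct2, THEN conjunct1] by blast
lemma rm_add_scal: "rm (p + q) c = rm p c + rm q c" using HH[THEN conjunct2, THEN conjunct2, THEN conjunct2, THEN conjunct2, THEN conjunct2, THEN conjunct1] by blast
lemma rm_mul: "rm (qmul p q) c = rm q (rm p c)" using HH[THEN conjunct2, THEN conjunct2, THEN conjunct2, THEN conjunct2, THEN conjunct2, THEN conjunct2, THEN conjunct1] by blast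
lemma rm_one: "rm qone c = c" using HH[THEN conjunct2, THEN conjunct2, THEN conjunct2, THEN conjunct2, THEN conjunct2, THEN conjunct2, THEN conjunct2, THEN conjunct1] by blast
lemma lm_real: "lm (qreal x) c = rm (qreal x) c" using HH[THEN conjunct2, THEN conjunct2, THEN conjunct2, THEN conjunct2, THEN conjunct2, THEN conjunct2, THEN conjunct2, THEN conjunct2, THEN conjunct2, THEN conjunct1] by blast
lemma ip_add1: "ip (c + d) e = ip c e + ip d e" using HH[THEN conjunct2, THEN conjunct2, THEN conjunct2, THEN conjunct2, THEN conjunct2, THEN conjunct2, THEN conjunct2, THEN conjunct2, THEN conjunct2, THEN conjunct2, THEN conjunct1] by blast
lemma ip_herm: "ip c d = qcnj (ip d c)" using HH[THEN conjunct2, THEN conjunct2, THEN conjunct2, THEN conjunct2, THEN conjunct2, THEN conjunct2, THEN conjunct2, THEN conjunct2, THEN conjunct2, THEN conjunct2, THEN conjunct2, THEN conjunct1] by blast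
lemma ip_rm1: "ip (rm a c) d = qmul (ip c d) a" using HH[THEN conjunct2, THEN conjunct2, THEN conjunct2, THEN conjunct2, THEN conjunct2, THEN conjunct2, THEN conjunct2, THEN conjunct2, THEN conjunct2, THEN conjunct2, THEN conjunct2, THEN conjunct2, THEN conjunct1] by blast
lemma ip_pos: "\<exists>t\<ge>0. ip c c = qreal t" using HH[THEN conjunct2, THEN conjunct2, THEN conjunct2, THEN conjunct2, THEN conjunct2, THEN conjunct2, THEN conjunct2, THEN conjunct2, THEN conjunct2, THEN conjunct2, THEN conjunct2, THEN conjunct2, THEN conjunct2, THEN conjunct1] by blast
lemma ip_def0: "ip c c = 0 \<Longrightarrow> c = 0" using HH[THEN conjunct2, THEN conjunct2, THEN conjunct2, THEN conjunct2, THEN conjunct2, THEN conjunct2, THEN conjunct2, THEN conjunct2, THEN conjunct2, THEN conjunct2, THEN conjunct2, THEN conjunct2, THEN conjunct2, THEN conjunct2, THEN conjunct1] by blast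
lemma complete: "(\<forall>\<epsilon>>0. \<exists>N. \<forall>m\<ge>N. \<forall>n\<ge>N. cnorm ip (X m - X n) < \<epsilon>)
          \<Longrightarrow> (\<exists>L. (\<lambda>n. cnorm ip (X n - L)) \<longlonglongrightarrow> 0)" using H unfolding two_sided_qhilbert_def by blast

lemma ip_add2: "ip e (c + d) = ip e c + ip e d"
  using ip_herm[of e "c + d"] ip_herm[of e c] ip_herm[of e d] ip_add1[of c d e] qcnj_add by simp
lemma ip_zero1[simp]: "ip 0 d = 0"
  using ip_add1[of 0 0 d] by simp
lemma ip_zero2[simp]: "ip d 0 = 0"
  using ip_herm[of d 0] by simp
lemma ip_minus1: "ip (- c) d = - ip c d"
  using ip_add1[of c "- c" d] by (simp add: eq_neg_iff_add_eq_0 add.commute)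
lemma ip_minus2: "ip d (- c) = - ip d c"
  using ip_herm[of d "- c"] ip_herm[of d c] ip_minus1[of c d] qcnj_minus by simp
lemma ip_diff1: "ip (c - e) d = ip c d - ip e d"
  using ip_add1[of c "- e" d] ip_minus1[of e d] by simp
lemma ip_diff2: "ip d (c - e) = ip d c - ip d e"
  using ip_add2[of d c "- e"] ip_minus2[of d e] by simp
lemma ip_rm2: "ip c (rm a d) = qmul (qcnj a) (ip c d)"
  using ip_herm[of c "rm a d"] ip_herm[of d c] ip_rm1[of a d c] qcnj_qmul by simp
lemma rm_zero[simp]: "rm a 0 = 0"
  using rm_add[of a 0 0] by simp
lemma rm_minus: "rm a (- c) = - rm a c"
  using rm_add[of a c "- c"] by (simp add: eq_neg_iff_add_eq_0 add.commute)
lemma rm_diff: "rm a (c - d) = rm a c - rm a d"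
  using rm_add[of a c "- d"] rm_minus[of a d] by simp

lemma ip_self_nonneg: "qRe (ip c c) \<ge> 0"
  using ip_pos[of c] by auto
lemma cnorm_nonneg: "cnorm ip c \<ge> 0" by (simp add: cnorm_def ip_self_nonneg)

lemma ip_self: "ip c c = qreal ((cnorm ip c)^2)"
proof -
  obtain t where "t \<ge> 0" "ip c c = qreal t" using ip_pos by blast
  then show ?thesis by (simp add: cnorm_def)
qed

lemma qRe_ip_self: "qRe (ip c c) = (cnorm ip c)^2" by (simp add: ip_self)

lemma cnorm_zero_iff: "cnorm ip c = 0 \<longleftrightarrow> c = 0"
proof
  assume "cnorm ip c = 0"
  then have "ip c c = 0" by (simp add: ip_self)
  then show "c = 0" by (rule ip_def0)
qed (simp add: cnorm_def)

lemma cnorm_zero[simp]: "cnorm ip 0 = 0" by (simp add: cnorm_zero_iff)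

lemma cnorm_rm: "cnorm ip (rm a c) = norm a * cnorm ip c"
proof -
  have "ip (rm a c) (rm a c) = qmul (qmul (qcnj a) (ip c c)) a" by (simp add: ip_rm1 ip_rm2 qmul_assoc)
  also have "\<dots> = qreal ((norm a * cnorm ip c)^2)"
    by (simp add: ip_self qmul_qreal_right qmul_scaleR_left qmul_qcnj_self2 scaleR_qreal power_mult_distrib mult.commute)
  finally show ?thesis using ip_self_nonneg[of c] by (simp add: cnorm_def)
qed

lemma cnorm_sq_eq: "(cnorm ip c)^2 = qRe (ip c c)" by (simp add: qRe_ip_self)

lemma cs: "norm (ip c d) \<le> cnorm ip c * cnorm ip d"
proof (cases "d = 0")
  case True then show ?thesis by (simp add: cnorm_nonneg)
next
  case False
  let ?q = "ip c d" and ?n = "cnorm ip d" and ?m = "cnorm ip c"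
  have n0: "?n > 0" using False cnorm_zero_iff cnorm_nonneg by (metis order_le_less)
  define s where "s = 1 / ?n^2"
  define a where "a = s *\<^sub>R ?q"
  have "0 \<le> qRe (ip (c - rm a d) (c - rm a d))" by (simp add: qRe_ip_self)
  also have "\<dots> = ?m^2 - qRe (qmul (qcnj a) ?q) - qRe (qmul (ip d c) a) + qRe (ip (rm a d) (rm a d))"
    by (simp add: ip_diff1 ip_diff2 ip_rm1 ip_rm2 qRe_diff qRe_ip_self qmul_diff_right qmul_diff_left qmul_assoc)
  also have "ip d c = qcnj ?q" by (rule ip_herm)
  also have "qRe (ip (rm a d) (rm a d)) = (norm a)^2 * ?n^2" by (simp add: qRe_ip_self cnorm_rm power_mult_distrib)
  also have "qRe (qmul (qcnj a) ?q) = s * (norm ?q)^2" unfolding a_def by (rule qRe_qmul_qcnj_scale)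
  also have "qRe (qmul (qcnj ?q) a) = s * (norm ?q)^2" unfolding a_def by (rule qRe_qmul_qcnj_scale2)
  also have "(norm a)^2 = s^2 * (norm ?q)^2" unfolding a_def by (simp add: power_mult_distrib)
  finally have A: "0 \<le> ?m^2 - s * (norm ?q)^2 - s * (norm ?q)^2 + s^2 * (norm ?q)^2 * ?n^2"
    by (simp add: mult.assoc)
  have B: "s^2 * ?n^2 = s" using n0 unfolding s_def by (simp add: power2_eq_square)
  have "s^2 * (norm ?q)^2 * ?n^2 = s * (norm ?q)^2" using B by (metis mult.commute mult.left_commute)
  with A have "s * (norm ?q)^2 \<le> ?m^2" by linarith
  then have "(norm ?q)^2 / ?n^2 \<le> ?m^2" by (simp add: s_def)
  then have "(norm ?q)^2 \<le> ?m^2 * ?n^2" using n0 by (simp add: divide_le_eq)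
  then have "(norm ?q)^2 \<le> (?m * ?n)^2" by (simp add: power_mult_distrib)
  then show ?thesis by (rule power2_le_imp_le[OF _ mult_nonneg_nonneg[OF cnorm_nonneg cnorm_nonneg]])
qed

lemma cnorm_sq_add: "(cnorm ip (c + d))^2 = (cnorm ip c)^2 + (cnorm ip d)^2 + 2 * qRe (ip c d)"
proof -
  have "qRe (ip d c) = qRe (ip c d)" using ip_herm[of d c] qRe_qcnj by simp
  then show ?thesis by (simp add: cnorm_sq_eq ip_add1 ip_add2 qRe_add)
qed

lemma cnorm_triangle: "cnorm ip (c + d) \<le> cnorm ip c + cnorm ip d"
proof -
  have "qRe (ip c d) \<le> cnorm ip c * cnorm ip d" using cs[of c d] qRe_le_norm[of "ip c d"] by linarith
  then have "(cnorm ip (c + d))^2 \<le> (cnorm ip c + cnorm ip d)^2"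
    by (simp add: cnorm_sq_add power2_sum)
  then show ?thesis by (rule power2_le_imp_le[OF _ add_nonneg_nonneg[OF cnorm_nonneg cnorm_nonneg]])
qed

lemma cnorm_minus: "cnorm ip (- c) = cnorm ip c"
  by (simp add: cnorm_def ip_minus1 ip_minus2)

lemma cnorm_diff_le: "cnorm ip (c - d) \<le> cnorm ip c + cnorm ip d"
  using cnorm_triangle[of c "- d"] by (simp add: cnorm_minus)

lemma cnorm_diff_commute: "cnorm ip (c - d) = cnorm ip (d - c)"
  using cnorm_minus[of "c - d"] by simp

lemma cnorm_sum: "cnorm ip (sum f A) \<le> (\<Sum>i\<in>A. cnorm ip (f i))"
proof (induct A rule: infinite_finite_induct)
  case (insert x F)
  then show ?case using cnorm_triangle[of "f x" "sum f F"] by simp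
qed simp_all

end


context qh begin

definition sc :: "real \<Rightarrow> 'c \<Rightarrow> 'c" where "sc s c = rm (qreal s) c"
definition rip :: "'c \<Rightarrow> 'c \<Rightarrow> real" where "rip c d = qRe (ip c d)"

lemma sc_add_scal: "sc (a + b) c = sc a c + sc b c" by (simp add: sc_def qreal_add rm_add_scal)
lemma sc_one[simp]: "sc 1 c = c" by (simp add: sc_def qreal_one rm_one)
lemma sc_sc: "sc a (sc b c) = sc (b * a) c" by (simp add: sc_def rm_mul[symmetric] qmul_qreal_qreal)
lemma sc_add: "sc s (c + d) = sc s c + sc s d" by (simp add: sc_def rm_add)
lemma sc_zero[simp]: "sc s 0 = 0" by (simp add: sc_def)
lemma rip_sc1: "rip (sc s c) d = s * rip c d" by (simp add: sc_def rip_def ip_rm1 qmul_qreal_right qRe_scaleR)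
lemma rip_sc2: "rip c (sc s d) = s * rip c d" by (simp add: sc_def rip_def ip_rm2 qmul_qreal_left qRe_scaleR)
lemma cnorm_sc: "cnorm ip (sc s c) = \<bar>s\<bar> * cnorm ip c" by (simp add: sc_def cnorm_rm)
lemma rip_sym: "rip c d = rip d c" by (metis rip_def ip_herm qRe_qcnj)
lemma rip_add2: "rip c (d + e) = rip c d + rip c e" by (simp add: rip_def ip_add2 qRe_add)
lemma rip_diff2: "rip c (d - e) = rip c d - rip c e" by (simp add: rip_def ip_diff2 qRe_diff)
lemma rip_self: "rip c c = (cnorm ip c)^2" by (simp add: rip_def qRe_ip_self)
lemma cnorm_sq_add': "(cnorm ip (c + d))^2 = (cnorm ip c)^2 + (cnorm ip d)^2 + 2 * rip c d"
  by (simp add: cnorm_sq_add rip_def)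
lemma parallelogram: "(cnorm ip (a - b))^2 + (cnorm ip (a + b))^2 = 2 * (cnorm ip a)^2 + 2 * (cnorm ip b)^2"
proof -
  have "rip a (- b) = - rip a b" by (simp add: rip_def ip_minus2 qRe_minus)
  moreover have "a - b = a + - b" by simp
  ultimately show ?thesis using cnorm_sq_add'[of a "- b"] cnorm_sq_add'[of a b]
    by (simp only: cnorm_minus)
qed

lemma riesz_real:
  fixes \<psi> :: "'c \<Rightarrow> real"
  assumes add: "\<And>c d. \<psi> (c + d) = \<psi> c + \<psi> d"
    and scal: "\<And>s c. \<psi> (sc s c) = s * \<psi> c"
    and bnd: "\<And>c. \<bar>\<psi> c\<bar> \<le> K * cnorm ip c"
  shows "\<exists>z. \<forall>c. \<psi> c = rip c z"
proof (cases "\<forall>c. \<psi> c = 0")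
  case True
  then show ?thesis by (intro exI[of _ 0]) (simp add: rip_def)
next
  case False
  have psi0: "\<psi> 0 = 0" using add[of 0 0] by simp
  have psidiff: "\<psi> (a - b) = \<psi> a - \<psi> b" for a b
    using add[of "a - b" b] by simp
  then obtain x0 where x0: "\<psi> x0 \<noteq> 0" using False by blast
  define A where "A = {x. \<psi> x = 1}"
  have x1A: "sc (1 / \<psi> x0) x0 \<in> A" using x0 by (simp add: A_def scal)
  define m where "m = Inf (cnorm ip ` A)"
  have bdd: "bdd_below (cnorm ip ` A)" by (meson bdd_belowI2 cnorm_nonneg)
  have mle: "m \<le> cnorm ip x" if "x \<in> A" for x
    unfolding m_def using bdd that by (simp add: cInf_lower)
  have m0: "m \<ge> 0" unfolding m_def using x1A by (intro cInf_greatest) (auto simp: cnorm_nonneg)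
  have approx: "\<exists>x\<in>A. (cnorm ip x)^2 < m^2 + \<delta>" if "\<delta> > 0" for \<delta>
  proof -
    have "m < sqrt (m^2 + \<delta>)" using that by (intro real_less_rsqrt) simp
    then have "Inf (cnorm ip ` A) < sqrt (m^2 + \<delta>)" by (simp add: m_def)
    then obtain x where x: "x \<in> A" "cnorm ip x < sqrt (m^2 + \<delta>)"
      using x1A by (subst (asm) cInf_less_iff) (auto simp: bdd)
    have "(cnorm ip x)^2 < (sqrt (m^2 + \<delta>))^2"
      using x(2) cnorm_nonneg by (intro power_strict_mono) auto
    also have "\<dots> = m^2 + \<delta>" using that by simp
    finally show ?thesis using x(1) by blast
  qed
  have "\<forall>n. \<exists>x. x \<in> A \<and> (cnorm ip x)^2 < m^2 + inverse (real (Suc n))"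
  proof
    fix n
    have "inverse (real (Suc n)) > 0" by simp
    then show "\<exists>x. x \<in> A \<and> (cnorm ip x)^2 < m^2 + inverse (real (Suc n))" using approx by blast
  qed
  then obtain X where XA: "\<And>n. X n \<in> A" and Xs: "\<And>n. (cnorm ip (X n))^2 < m^2 + inverse (real (Suc n))"
    by metis
  have mid: "(cnorm ip (X n - X k))^2 \<le> 2 * inverse (real (Suc n)) + 2 * inverse (real (Suc k))" for n k
  proof -
    define w where "w = sc (1/2) (X n + X k)"
    have "\<psi> w = 1" using XA[of n] XA[of k] by (simp add: w_def scal add A_def)
    then have "m \<le> cnorm ip w" using mle A_def by auto
    also have "cnorm ip w = cnorm ip (X n + X k) / 2" by (simp add: w_def cnorm_sc)
    finally have "2 * m \<le> cnorm ip (X n + X k)" by simp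
    then have "(2 * m)^2 \<le> (cnorm ip (X n + X k))^2" using m0 by (intro power_mono) auto
    then have "4 * m^2 \<le> (cnorm ip (X n + X k))^2" by (simp add: power_mult_distrib)
    then show ?thesis using parallelogram[of "X n" "X k"] Xs[of n] Xs[of k] by linarith
  qed
  have cauchy: "\<forall>\<epsilon>>0. \<exists>N. \<forall>n\<ge>N. \<forall>k\<ge>N. cnorm ip (X n - X k) < \<epsilon>"
  proof (intro allI impI)
    fix \<epsilon> :: real assume e: "\<epsilon> > 0"
    obtain N :: nat where N: "real N > 4 / \<epsilon>^2" using reals_Archimedean2 by blast
    have "\<forall>n\<ge>N. \<forall>k\<ge>N. cnorm ip (X n - X k) < \<epsilon>"
    proof (intro allI impI)
      fix n k assume nk: "n \<ge> N" "k \<ge> N"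
      have i1: "inverse (real (Suc n)) \<le> inverse (real (Suc N))" using nk by (simp add: le_imp_inverse_le)
      have i2: "inverse (real (Suc k)) \<le> inverse (real (Suc N))" using nk by (simp add: le_imp_inverse_le)
      have "4 * inverse (real (Suc N)) < \<epsilon>^2"
      proof -
        have "4 / \<epsilon>^2 < real (Suc N)" using N by simp
        then have "4 < real (Suc N) * \<epsilon>^2" using e by (simp add: field_simps)
        then show ?thesis by (simp add: field_simps)
      qed
      then have "(cnorm ip (X n - X k))^2 < \<epsilon>^2" using mid[of n k] i1 i2 by linarith
      then show "cnorm ip (X n - X k) < \<epsilon>" using e by (simp add: power_less_imp_less_base)
    qed
    then show "\<exists>N. \<forall>n\<ge>N. \<forall>k\<ge>N. cnorm ip (X n - X k) < \<epsilon>" by blast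
  qed
  obtain L where L: "(\<lambda>n. cnorm ip (X n - L)) \<longlonglongrightarrow> 0" using complete[OF cauchy] by blast
  have psiL: "\<psi> L = 1"
  proof -
    have "(\<lambda>n. K * cnorm ip (X n - L)) \<longlonglongrightarrow> K * 0" by (intro tendsto_intros L)
    moreover have "\<bar>1 - \<psi> L\<bar> \<le> K * cnorm ip (X n - L)" for n
      using bnd[of "X n - L"] XA[of n] by (simp add: psidiff A_def)
    ultimately have "\<bar>1 - \<psi> L\<bar> \<le> K * 0"
      by (intro tendsto_le[OF _ _ tendsto_const]) auto
    then show ?thesis by simp
  qed
  have cnL: "cnorm ip L \<le> m"
  proof -
    have "(\<lambda>n. sqrt (m^2 + inverse (real (Suc n))) + cnorm ip (X n - L)) \<longlonglongrightarrow> sqrt (m^2 + 0) + 0"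
      by (intro tendsto_intros L LIMSEQ_inverse_real_of_nat)
    moreover have "cnorm ip L \<le> sqrt (m^2 + inverse (real (Suc n))) + cnorm ip (X n - L)" for n
    proof -
      have "cnorm ip L \<le> cnorm ip (X n) + cnorm ip (L - X n)"
        using cnorm_triangle[of "X n" "L - X n"] by simp
      moreover have "cnorm ip (X n) \<le> sqrt (m^2 + inverse (real (Suc n)))"
        using Xs[of n] cnorm_nonneg by (metis less_imp_le real_le_rsqrt)
      ultimately show ?thesis using cnorm_diff_commute by (metis add_mono order_trans order_refl)
    qed
    ultimately have "cnorm ip L \<le> sqrt (m^2 + 0) + 0"
      by (intro tendsto_le[OF _ _ tendsto_const]) auto
    then show ?thesis using m0 by simp
  qed
  have orth: "rip L n = 0" if "\<psi> n = 0" for n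
  proof -
    define \<rho> where "\<rho> = rip L n"
    define N where "N = (cnorm ip n)^2"
    have N0: "N \<ge> 0" by (simp add: N_def)
    define s where "s = - \<rho> / (N + 1)"
    have "\<psi> (L + sc s n) = 1" using psiL that by (simp add: add scal)
    then have "m \<le> cnorm ip (L + sc s n)" using mle A_def by auto
    then have "cnorm ip L \<le> cnorm ip (L + sc s n)" using cnL by linarith
    then have "(cnorm ip L)^2 \<le> (cnorm ip (L + sc s n))^2" using cnorm_nonneg by (simp add: power_mono)
    then have A: "0 \<le> s^2 * N + 2 * s * \<rho>"
      by (simp add: cnorm_sq_add' cnorm_sc rip_sc2 power_mult_distrib N_def \<rho>_def)
    have rho: "\<rho> = - s * (N + 1)" using N0 unfolding s_def by (simp add: field_simps)
    have B: "2 * s * \<rho> = - 2 * s^2 * (N + 1)" unfolding rho by algebra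
    have C: "s^2 * N + - 2 * s^2 * (N + 1) = - (s^2 * (N + 2))" by algebra
    have "s^2 * (N + 2) \<le> 0" using A B C by linarith
    moreover have "s^2 * (N + 2) \<ge> 0" using N0 by simp
    ultimately have "s^2 * (N + 2) = 0" by linarith
    then have "s = 0" using N0 by simp
    then have "\<rho> = 0" using rho by simp
    then show ?thesis by (simp add: \<rho>_def)
  qed
  have "L \<noteq> 0"
  proof
    assume "L = 0"
    then have "\<psi> L = 0" using psi0 by simp
    then show False using psiL by simp
  qed
  then have L0: "cnorm ip L \<noteq> 0" by (simp add: cnorm_zero_iff)
  define z where "z = sc (1 / (cnorm ip L)^2) L"
  have "\<psi> c = rip c z" for c
  proof -
    have "\<psi> (c - sc (\<psi> c) L) = 0" by (simp add: psidiff scal psiL)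
    then have "rip L (c - sc (\<psi> c) L) = 0" by (rule orth)
    then have "rip L c = \<psi> c * (cnorm ip L)^2" by (simp add: rip_diff2 rip_sc2 rip_self)
    then show ?thesis using L0 by (simp add: z_def rip_sc2 rip_sym[of c L])
  qed
  then show ?thesis by blast
qed

lemma riesz_q:
  fixes \<phi> :: "'c \<Rightarrow> quat"
  assumes add: "\<And>c d. \<phi> (c + d) = \<phi> c + \<phi> d"
    and scal: "\<And>a c. \<phi> (rm a c) = qmul (\<phi> c) a"
    and bnd: "\<And>c. norm (\<phi> c) \<le> K * cnorm ip c"
  shows "\<exists>z. \<forall>c. \<phi> c = ip c z"
proof -
  have "\<exists>z. \<forall>c. qRe (\<phi> c) = rip c z"
  proof (rule riesz_real)
    show "qRe (\<phi> (c + d)) = qRe (\<phi> c) + qRe (\<phi> d)" for c d by (simp add: add qRe_add)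
    show "qRe (\<phi> (sc s c)) = s * qRe (\<phi> c)" for s c by (simp add: sc_def scal qmul_qreal_right qRe_scaleR)
    show "\<bar>qRe (\<phi> c)\<bar> \<le> K * cnorm ip c" for c using bnd[of c] qRe_le_norm order_trans by blast
  qed
  then obtain z where z: "\<And>c. qRe (\<phi> c) = rip c z" by blast
  have "\<phi> c = ip c z" for c
  proof -
    define q where "q = \<phi> c - ip c z"
    have "qRe (qmul q (qcnj q)) = 0"
      using z[of "rm (qcnj q) c"] by (simp add: q_def qmul_diff_left qRe_diff scal rip_def ip_rm1)
    then have "norm q = 0" by (simp add: qmul_qcnj_self)
    then show ?thesis by (simp add: q_def)
  qed
  then show ?thesis by blast
qed

lemma qbounded_K: "qbounded_op rm ip T \<Longrightarrow> \<exists>K\<ge>0. \<forall>c. cnorm ip (T c) \<le> K * cnorm ip c"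
  unfolding qbounded_op_def
  by (metis cnorm_nonneg max.cobounded1 max.cobounded2 mult_right_mono order_trans)

lemma adjoint:
  assumes T: "qbounded_op rm ip T"
  shows "ip (T c) d = ip c (qadjoint ip T d)"
proof -
  obtain K where K: "K \<ge> 0" "\<And>c. cnorm ip (T c) \<le> K * cnorm ip c" using qbounded_K[OF T] by blast
  have Tadd: "T (c + d) = T c + T d" for c d using T by (simp add: qbounded_op_def)
  have Trm: "T (rm a c) = rm a (T c)" for a c using T unfolding qbounded_op_def by blast
  have "\<forall>d. \<exists>e. \<forall>c. ip (T c) d = ip c e"
  proof
    fix d
    show "\<exists>e. \<forall>c. ip (T c) d = ip c e"
    proof (rule riesz_q)
      show "ip (T (c + c')) d = ip (T c) d + ip (T c') d" for c c' by (simp add: Tadd ip_add1)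
      show "ip (T (rm a c)) d = qmul (ip (T c) d) a" for a c by (simp add: Trm ip_rm1)
      show "norm (ip (T c) d) \<le> (K * cnorm ip d) * cnorm ip c" for c
      proof -
        have "norm (ip (T c) d) \<le> cnorm ip (T c) * cnorm ip d" by (rule cs)
        also have "\<dots> \<le> K * cnorm ip c * cnorm ip d" using K cnorm_nonneg by (simp add: mult_right_mono)
        finally show ?thesis by (simp add: ac_simps)
      qed
    qed
  qed
  then obtain S where S: "\<forall>c d. ip (T c) d = ip c (S d)" by metis
  have uniq: "S' = S" if "\<forall>c d. ip (T c) d = ip c (S' d)" for S'
  proof
    fix d
    have "ip (S' d - S d) (S' d - S d) = 0" using that S by (simp add: ip_diff2)
    then have "S' d - S d = 0" by (rule ip_def0)
    then show "S' d = S d" by simp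
  qed
  have "\<forall>c d. ip (T c) d = ip c (qadjoint ip T d)"
    unfolding qadjoint_def by (rule theI[of _ S]) (use S uniq in blast)+
  then show ?thesis by blast
qed

end


lemma dsum:
  fixes \<tau> :: "nat \<Rightarrow> nat \<Rightarrow> quat"
  assumes "0 \<le> \<rho>" "\<rho> < 1" "0 \<le> \<sigma>" "\<sigma> < 1" "0 \<le> D"
    and b: "\<And>v u. 1 \<le> u \<Longrightarrow> u \<le> v \<Longrightarrow> norm (\<tau> v u) \<le> D * \<rho>^(v-u) * \<sigma>^u"
  shows "summable (\<lambda>v. \<Sum>u=1..v. \<tau> v u) \<and> norm (\<Sum>v. \<Sum>u=1..v. \<tau> v u) \<le> D * ((1 / (1 - \<sigma>)) * (1 / (1 - \<rho>)))"
proof -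
  define W where "W v = (\<Sum>i\<le>v. \<sigma>^i * \<rho>^(v - i))" for v
  have "(\<lambda>k. norm (\<sigma>^k)) sums (1 / (1 - \<sigma>))" using assms by (simp add: geometric_sums)
  moreover have "(\<lambda>k. norm (\<rho>^k)) sums (1 / (1 - \<rho>))" using assms by (simp add: geometric_sums)
  ultimately have "W sums ((\<Sum>k. \<sigma>^k) * (\<Sum>k. \<rho>^k))"
    unfolding W_def by (intro Cauchy_product_sums) (auto simp: sums_iff)
  moreover have "(\<Sum>k. \<sigma>^k) = 1 / (1 - \<sigma>)" "(\<Sum>k. \<rho>^k) = 1 / (1 - \<rho>)"
    using assms by (simp_all add: suminf_geometric)
  ultimately have Ws: "W sums ((1 / (1 - \<sigma>)) * (1 / (1 - \<rho>)))" by simp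
  have nb: "norm (\<Sum>u=1..v. \<tau> v u) \<le> D * W v" for v
  proof -
    have "norm (\<Sum>u=1..v. \<tau> v u) \<le> (\<Sum>u=1..v. norm (\<tau> v u))" by (rule norm_sum)
    also have "\<dots> \<le> (\<Sum>u=1..v. D * (\<sigma>^u * \<rho>^(v-u)))"
      by (rule sum_mono) (use b in \<open>auto simp: ac_simps\<close>)
    also have "\<dots> \<le> (\<Sum>u\<le>v. D * (\<sigma>^u * \<rho>^(v-u)))"
      by (rule sum_mono2) (use assms in auto)
    also have "\<dots> = D * W v" by (simp add: W_def sum_distrib_left)
    finally show ?thesis .
  qed
  have sDW: "summable (\<lambda>v. D * W v)" using Ws by (intro summable_mult) (simp add: sums_iff)
  have s1: "summable (\<lambda>v. norm (\<Sum>u=1..v. \<tau> v u))"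
    by (rule summable_comparison_test[OF _ sDW]) (use nb in auto)
  then have s: "summable (\<lambda>v. \<Sum>u=1..v. \<tau> v u)" by (rule summable_norm_cancel)
  have "norm (\<Sum>v. \<Sum>u=1..v. \<tau> v u) \<le> (\<Sum>v. norm (\<Sum>u=1..v. \<tau> v u))" by (rule summable_norm[OF s1])
  also have "\<dots> \<le> (\<Sum>v. D * W v)" by (rule suminf_le[OF nb s1 sDW])
  also have "\<dots> = D * ((1 / (1 - \<sigma>)) * (1 / (1 - \<rho>)))" using Ws by (simp add: sums_iff suminf_mult)
  finally show ?thesis using s by blast
qed

context qh begin

definition pb :: "real \<Rightarrow> (nat \<Rightarrow> 'c) \<Rightarrow> real \<Rightarrow> bool" where
  "pb r h H \<longleftrightarrow> H \<ge> 0 \<and> (\<forall>j\<ge>1. cnorm ip (h j) \<le> H * r^j)"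

lemma pow_split: "u \<le> v \<Longrightarrow> (1 / t)^(v - u) * (r::real)^v * r^u = (r / t)^(v - u) * (r^2)^u"
proof -
  assume "u \<le> v"
  then have "r^v = r^(v-u) * r^u" by (simp flip: power_add)
  then show ?thesis by (simp add: power_divide power_mult_distrib power2_eq_square power_mult[symmetric] algebra_simps)
qed

lemma form_part2_alt:
  assumes "\<forall>k. qbounded_op rm ip (\<Phi> k)"
  shows "form_part2 ip \<Phi> f g u = (\<Sum>v=1..u. qcnj (ip (\<Phi> (u - v) (g u)) (f v)))"
  unfolding form_part2_def
proof (rule sum.cong[OF refl])
  fix v
  show "ip (qadjoint ip (\<Phi> (u - v)) (f v)) (g u) = qcnj (ip (\<Phi> (u - v) (g u)) (f v))"
    using adjoint[of "\<Phi> (u - v)" "g u" "f v"] assms ip_herm by metis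
qed

lemma est:
  assumes Pb: "\<forall>k. qbounded_op rm ip (\<Phi> k)"
    and Mb: "\<And>k c. cnorm ip (\<Phi> k c) \<le> M * (1 / t)^k * cnorm ip c"
    and M0: "M \<ge> 0" and r: "0 < r" "r < t" "r < 1"
    and h: "pb r h H" and k: "pb r k G"
  shows "summable (form_part1 ip \<Phi> h k) \<and> norm (\<Sum>v. form_part1 ip \<Phi> h k v) \<le> (M * H * G) * ((1 / (1 - r^2)) * (1 / (1 - r / t)))"
    and "summable (form_part2 ip \<Phi> h k) \<and> norm (\<Sum>v. form_part2 ip \<Phi> h k v) \<le> (M * H * G) * ((1 / (1 - r^2)) * (1 / (1 - r / t)))"
proof -
  have H0: "H \<ge> 0" and hb: "\<And>j. j \<ge> 1 \<Longrightarrow> cnorm ip (h j) \<le> H * r^j" using h by (auto simp: pb_def)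
  have G0: "G \<ge> 0" and kb: "\<And>j. j \<ge> 1 \<Longrightarrow> cnorm ip (k j) \<le> G * r^j" using k by (auto simp: pb_def)
  have t0: "t > 0" using r by linarith
  have r2: "r^2 < 1" using r by (simp add: power_less_one_iff abs_of_pos)
  have rt: "r / t < 1" "0 \<le> r / t" using r t0 by auto
  have key: "norm (ip (\<Phi> (v - u) (x v)) (y u)) \<le> (M * X * Y) * (r / t)^(v - u) * (r^2)^u"
    if "1 \<le> u" "u \<le> v" "\<And>j. j \<ge> 1 \<Longrightarrow> cnorm ip (x j) \<le> X * r^j"
       "\<And>j. j \<ge> 1 \<Longrightarrow> cnorm ip (y j) \<le> Y * r^j" "X \<ge> 0" "Y \<ge> 0" for u v x y X Y
  proof -
    have "norm (ip (\<Phi> (v - u) (x v)) (y u)) \<le> cnorm ip (\<Phi> (v - u) (x v)) * cnorm ip (y u)" by (rule cs)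
    also have "\<dots> \<le> (M * (1 / t)^(v - u) * cnorm ip (x v)) * cnorm ip (y u)"
      by (rule mult_right_mono[OF Mb cnorm_nonneg])
    also have "\<dots> \<le> (M * (1 / t)^(v - u) * (X * r^v)) * (Y * r^u)"
      using that t0 M0 r(1) cnorm_nonneg
      by (intro mult_mono mult_left_mono) (auto intro: mult_nonneg_nonneg)
    also have "\<dots> = (M * X * Y) * ((1 / t)^(v - u) * r^v * r^u)" by (simp add: ac_simps)
    also have "\<dots> = (M * X * Y) * (r / t)^(v - u) * (r^2)^u" using pow_split[OF that(2), of t r] by simp
    finally show ?thesis .
  qed
  have MHG: "M * H * G \<ge> 0" using M0 H0 G0 by simp
  show "summable (form_part1 ip \<Phi> h k) \<and> norm (\<Sum>v. form_part1 ip \<Phi> h k v) \<le> (M * H * G) * ((1 / (1 - r^2)) * (1 / (1 - r / t)))"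
    unfolding form_part1_def
    by (rule dsum[OF rt(2) rt(1) _ r2 MHG]) (use key hb kb H0 G0 in auto)
  have D2: "summable (\<lambda>u. \<Sum>v=1..u. qcnj (ip (\<Phi> (u - v) (k u)) (h v))) \<and>
        norm (\<Sum>u. \<Sum>v=1..u. qcnj (ip (\<Phi> (u - v) (k u)) (h v))) \<le> (M * G * H) * ((1 / (1 - r^2)) * (1 / (1 - r / t)))"
    by (rule dsum[OF rt(2) rt(1) _ r2]) (use key hb kb H0 G0 M0 in auto)
  show "summable (form_part2 ip \<Phi> h k) \<and> norm (\<Sum>v. form_part2 ip \<Phi> h k v) \<le> (M * H * G) * ((1 / (1 - r^2)) * (1 / (1 - r / t)))"
  proof -
    have eq: "form_part2 ip \<Phi> h k = (\<lambda>u. \<Sum>v=1..u. qcnj (ip (\<Phi> (u - v) (k u)) (h v)))"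
      by (rule ext) (rule form_part2_alt[OF Pb])
    have "M * G * H = M * H * G" by simp
    then show ?thesis unfolding eq using D2 by metis
  qed
qed

end


context qh begin

lemma qb_add: "qbounded_op rm ip T \<Longrightarrow> T (c + d) = T c + T d" by (simp add: qbounded_op_def)
lemma qb_rm: "qbounded_op rm ip T \<Longrightarrow> T (rm a c) = rm a (T c)" unfolding qbounded_op_def by blast
lemma qb_zero: "qbounded_op rm ip T \<Longrightarrow> T 0 = 0" using qb_add[of T 0 0] by simp

lemma pb_add: "pb r h H \<Longrightarrow> pb r a A \<Longrightarrow> pb r (\<lambda>j. h j + a j) (H + A)"
  unfolding pb_def
proof (intro conjI allI impI)
  fix j :: nat assume *: "0 \<le> H \<and> (\<forall>j\<ge>1. cnorm ip (h j) \<le> H * r ^ j)" "0 \<le> A \<and> (\<forall>j\<ge>1. cnorm ip (a j) \<le> A * r ^ j)" "1 \<le> j"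
  have "cnorm ip (h j + a j) \<le> cnorm ip (h j) + cnorm ip (a j)" using cnorm_triangle by simp
  also have "\<dots> \<le> H * r^j + A * r^j" using * by (intro add_mono) auto
  finally show "cnorm ip (h j + a j) \<le> (H + A) * r ^ j" by (simp add: algebra_simps)
qed (auto simp: pb_def)

lemma opnorm_upper:
  assumes "\<And>c. cnorm ip (T c) \<le> K * cnorm ip c" "cnorm ip c \<le> 1"
  shows "cnorm ip (T c) \<le> opnorm ip T"
  unfolding opnorm_def
proof (rule cSUP_upper)
  show "c \<in> {c. cnorm ip c \<le> 1}" using assms by simp
  show "bdd_above ((\<lambda>c. cnorm ip (T c)) ` {c. cnorm ip c \<le> 1})"
  proof (rule bdd_aboveI2)
    fix x assume "x \<in> {c. cnorm ip c \<le> 1}"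
    then have x1: "cnorm ip x \<le> 1" by simp
    have "cnorm ip (T x) \<le> K * cnorm ip x" by (rule assms(1))
    also have "\<dots> \<le> \<bar>K\<bar> * cnorm ip x" by (rule mult_right_mono) (auto simp: cnorm_nonneg)
    also have "\<dots> \<le> \<bar>K\<bar> * 1" using x1 by (intro mult_left_mono) auto
    finally show "cnorm ip (T x) \<le> \<bar>K\<bar>" by simp
  qed
qed

lemma coeff_bound:
  assumes Pb: "\<forall>u. qbounded_op rm ip (\<Phi> u)" and P: "qbounded_op rm ip P" and t: "t > 0"
    and conv: "(\<lambda>N. opnorm ip (\<lambda>c. P c - (\<Sum>u<N. lm (qpow (qreal t) u) (\<Phi> u c)))) \<longlonglongrightarrow> 0"
  shows "\<exists>M\<ge>0. \<forall>k c. cnorm ip (\<Phi> k c) \<le> M * (1 / t)^k * cnorm ip c"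
proof -
  define D where "D N c = P c - (\<Sum>u<N. lm (qpow (qreal t) u) (\<Phi> u c))" for N c
  have Deq: "D N c = P c - (\<Sum>u<N. sc (t^u) (\<Phi> u c))" for N c
    by (simp add: D_def qpow_qreal lm_real sc_def)
  obtain KP where KP: "KP \<ge> 0" "\<And>c. cnorm ip (P c) \<le> KP * cnorm ip c" using qbounded_K[OF P] by blast
  have "\<forall>u. \<exists>K\<ge>0. \<forall>c. cnorm ip (\<Phi> u c) \<le> K * cnorm ip c" using Pb qbounded_K by blast
  then obtain Kf where Kf: "\<And>u. Kf u \<ge> 0" "\<And>u c. cnorm ip (\<Phi> u c) \<le> Kf u * cnorm ip c" by metis
  have Dbnd: "cnorm ip (D N c) \<le> (KP + (\<Sum>u<N. t^u * Kf u)) * cnorm ip c" for N c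
  proof -
    have "cnorm ip (D N c) \<le> cnorm ip (P c) + cnorm ip (\<Sum>u<N. sc (t^u) (\<Phi> u c))"
      unfolding Deq by (rule cnorm_diff_le)
    also have "cnorm ip (\<Sum>u<N. sc (t^u) (\<Phi> u c)) \<le> (\<Sum>u<N. cnorm ip (sc (t^u) (\<Phi> u c)))"
      by (rule cnorm_sum)
    also have "\<dots> \<le> (\<Sum>u<N. t^u * Kf u * cnorm ip c)"
    proof (rule sum_mono)
      fix u
      have "cnorm ip (sc (t^u) (\<Phi> u c)) = t^u * cnorm ip (\<Phi> u c)" using t by (simp add: cnorm_sc)
      also have "\<dots> \<le> t^u * (Kf u * cnorm ip c)" using t Kf(2) by (intro mult_left_mono) auto
      finally show "cnorm ip (sc (t^u) (\<Phi> u c)) \<le> t^u * Kf u * cnorm ip c" by (simp add: ac_simps)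
    qed
    moreover have "(\<Sum>u<N. t^u * Kf u * cnorm ip c) = (\<Sum>u<N. t^u * Kf u) * cnorm ip c" by (simp add: sum_distrib_right)
    ultimately show ?thesis using KP(2)[of c] by (simp only: distrib_right) linarith
  qed
  have "Bseq (\<lambda>N. opnorm ip (D N))" using conv unfolding D_def
    by (intro convergent_imp_Bseq convergentI)
  then obtain B where B: "B > 0" "\<And>N. norm (opnorm ip (D N)) \<le> B" by (auto elim: BseqE)
  have DB: "cnorm ip (D N c) \<le> B" if "cnorm ip c \<le> 1" for N c
  proof -
    have "cnorm ip (D N c) \<le> opnorm ip (D N)" by (rule opnorm_upper[OF Dbnd that])
    also have "\<dots> \<le> B" using B(2)[of N] by simp
    finally show ?thesis .
  qed
  have unit: "cnorm ip (\<Phi> N c) \<le> 2 * B * (1 / t)^N" if "cnorm ip c \<le> 1" for N c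
  proof -
    have "D N c - D (Suc N) c = sc (t^N) (\<Phi> N c)" by (simp add: Deq)
    then have "t^N * cnorm ip (\<Phi> N c) = cnorm ip (D N c - D (Suc N) c)" using t by (simp add: cnorm_sc)
    also have "\<dots> \<le> cnorm ip (D N c) + cnorm ip (D (Suc N) c)" by (rule cnorm_diff_le)
    also have "\<dots> \<le> 2 * B" using DB[OF that, of N] DB[OF that, of "Suc N"] by simp
    finally have "t^N * cnorm ip (\<Phi> N c) \<le> 2 * B" .
    then show ?thesis using t by (simp add: power_one_over field_simps)
  qed
  have "cnorm ip (\<Phi> k c) \<le> (2 * B) * (1 / t)^k * cnorm ip c" for k c
  proof (cases "c = 0")
    case True
    then show ?thesis using qb_zero[of "\<Phi> k"] Pb by simp
  next
    case False
    define s where "s = cnorm ip c"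
    have "cnorm ip c \<noteq> 0" using False cnorm_zero_iff by blast
    then have s0: "s > 0" using cnorm_nonneg[of c] unfolding s_def by linarith
    define c' where "c' = sc (1 / s) c"
    have "cnorm ip c' = \<bar>1 / s\<bar> * s" unfolding c'_def cnorm_sc s_def by (rule refl)
    then have c'1: "cnorm ip c' = 1" using s0 by simp
    have "(1 / s) * s = 1" using s0 by simp
    then have cc: "c = sc s c'" unfolding c'_def sc_sc by simp
    have "\<Phi> k c = \<Phi> k (sc s c')" using cc by (rule arg_cong)
    also have "\<dots> = sc s (\<Phi> k c')" unfolding sc_def using Pb by (intro qb_rm) blast
    finally have "\<Phi> k c = sc s (\<Phi> k c')" .
    then have "cnorm ip (\<Phi> k c) = s * cnorm ip (\<Phi> k c')" using s0 by (simp add: cnorm_sc)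
    also have "\<dots> \<le> s * (2 * B * (1 / t)^k)" using unit[of c' k] c'1 s0 by (intro mult_left_mono) auto
    finally show ?thesis by (simp add: s_def ac_simps)
  qed
  moreover have "2 * B \<ge> 0" using B by simp
  ultimately show ?thesis by blast
qed

lemma l2r_nonneg: "h \<in> l2r ip R \<Longrightarrow> l2r_norm ip R h \<ge> 0"
  unfolding l2r_norm_def l2r_def
proof -
  assume "h \<in> {f. summable (\<lambda>u. R ^ (2 * Suc u) * (cnorm ip (f (Suc u)))\<^sup>2)}"
  then have S: "summable (\<lambda>u. R ^ (2 * Suc u) * (cnorm ip (h (Suc u)))\<^sup>2)" by (simp only: mem_Collect_eq)
  have "0 \<le> (\<Sum>u. R ^ (2 * Suc u) * (cnorm ip (h (Suc u)))\<^sup>2)"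
    by (rule suminf_nonneg[OF S]) (simp only: power_mult, simp)
  then show "0 \<le> sqrt (\<Sum>u. R ^ (2 * Suc u) * (cnorm ip (h (Suc u)))\<^sup>2)" by simp
qed

lemma l2r_pb:
  assumes r: "0 < r" and h: "h \<in> l2r ip (1 / r)"
  shows "pb r h (l2r_norm ip (1 / r) h)"
  unfolding pb_def
proof (intro conjI allI impI)
  show "0 \<le> l2r_norm ip (1 / r) h" by (rule l2r_nonneg[OF h])
  fix j :: nat assume j: "1 \<le> j"
  then obtain i where i: "j = Suc i" by (cases j) auto
  define T where "T u = (1 / r) ^ (2 * Suc u) * (cnorm ip (h (Suc u)))\<^sup>2" for u
  have sT: "summable T" using h unfolding l2r_def T_def by (simp only: mem_Collect_eq)
  have T0: "T u \<ge> 0" for u unfolding T_def by (simp only: power_mult, simp)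
  have "sum T {i} \<le> suminf T" by (rule sum_le_suminf[OF sT]) (auto simp: T0)
  then have "T i \<le> suminf T" by simp
  moreover have "T i = ((1 / r)^j * cnorm ip (h j))^2"
  proof -
    have "(1/r)^(2 * Suc i) = ((1/r)^(Suc i))^2" by (simp only: power_mult[symmetric] mult.commute)
    then show ?thesis by (simp only: T_def i power_mult_distrib)
  qed
  ultimately have "((1 / r)^j * cnorm ip (h j))^2 \<le> suminf T" by simp
  then have "(1 / r)^j * cnorm ip (h j) \<le> sqrt (suminf T)" by (rule real_le_rsqrt)
  then have "(1 / r)^j * cnorm ip (h j) \<le> l2r_norm ip (1 / r) h" unfolding l2r_norm_def T_def .
  then have "r^j * ((1 / r)^j * cnorm ip (h j)) \<le> r^j * l2r_norm ip (1 / r) h" using r by (intro mult_left_mono) auto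
  then show "cnorm ip (h j) \<le> l2r_norm ip (1 / r) h * r ^ j" using r by (simp add: power_one_over field_simps)
qed

lemma l2r_diff:
  assumes R: "R > 0" and h: "h \<in> l2r ip R" and g: "g \<in> l2r ip R"
  shows "h - g \<in> l2r ip R"
proof -
  define A where "A u = R ^ (2 * Suc u) * (cnorm ip (h (Suc u)))\<^sup>2" for u
  define B where "B u = R ^ (2 * Suc u) * (cnorm ip (g (Suc u)))\<^sup>2" for u
  define E where "E u = R ^ (2 * Suc u) * (cnorm ip ((h - g) (Suc u)))\<^sup>2" for u
  have sh: "summable A" using h unfolding l2r_def A_def by (simp only: mem_Collect_eq)
  have sg: "summable B" using g unfolding l2r_def B_def by (simp only: mem_Collect_eq)
  have S: "summable (\<lambda>u. 2 * A u + 2 * B u)"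
    by (intro summable_add summable_mult sh sg)
  have bound: "norm (E u) \<le> 2 * A u + 2 * B u" for u
  proof -
    define a where "a = cnorm ip (h (Suc u))"
    define b where "b = cnorm ip (g (Suc u))"
    define d where "d = cnorm ip (h (Suc u) - g (Suc u))"
    define q where "q = R ^ (2 * Suc u)"
    have q0: "q \<ge> 0" using R unfolding q_def by simp
    have d1: "d \<le> a + b" unfolding a_def b_def d_def by (rule cnorm_diff_le)
    have d0: "0 \<le> d" unfolding d_def by (rule cnorm_nonneg)
    have "d^2 \<le> (a + b)^2" using d1 d0 by (intro power_mono) auto
    also have "\<dots> \<le> 2 * a^2 + 2 * b^2"
    proof -
      have "(a + b)^2 = 2 * a^2 + 2 * b^2 - (a - b)^2" by (simp add: power2_eq_square algebra_simps)
      moreover have "(a - b)^2 \<ge> 0" by simp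
      ultimately show ?thesis by linarith
    qed
    finally have "d^2 \<le> 2 * a^2 + 2 * b^2" .
    then have "q * d^2 \<le> q * (2 * a^2 + 2 * b^2)" using q0 by (rule mult_left_mono)
    also have "\<dots> = 2 * (q * a^2) + 2 * (q * b^2)" by (simp only: distrib_left mult.left_commute)
    finally have X: "q * d^2 \<le> 2 * (q * a^2) + 2 * (q * b^2)" .
    have E: "E u = q * d^2" unfolding E_def q_def d_def by simp
    have "norm (E u) = q * d^2" unfolding E using q0 by simp
    then show ?thesis using X unfolding A_def B_def q_def a_def b_def by simp
  qed
  have "summable E" by (rule summable_comparison_test[OF _ S]) (use bound in blast)
  then show ?thesis unfolding l2r_def E_def by (simp only: mem_Collect_eq)
qed

end


context qh begin
context
  fixes \<Phi> :: "nat \<Rightarrow> 'c \<Rightarrow> 'c" and M t r K :: real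
  assumes Pb: "\<forall>k. qbounded_op rm ip (\<Phi> k)"
    and Mb: "\<And>k c. cnorm ip (\<Phi> k c) \<le> M * (1 / t)^k * cnorm ip c"
    and M0: "M \<ge> 0" and rr: "0 < r" "r < t" "r < 1"
    and K: "K = 2 * (M * ((1 / (1 - r^2)) * (1 / (1 - r / t))))"
begin

lemma K0: "K \<ge> 0"
proof -
  have t0: "t > 0" using rr by linarith
  have r2: "r^2 < 1" using rr by (simp add: power_less_one_iff abs_of_pos)
  have "r / t < 1" using rr t0 by simp
  then show ?thesis using r2 M0 unfolding K by simp
qed

lemma est2:
  assumes h: "pb r h H" and k: "pb r k G"
  shows "summable (form_part1 ip \<Phi> h k)" "summable (form_part2 ip \<Phi> h k)"
    and "norm (phi_form ip \<Phi> h k) \<le> K * H * G"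
proof -
  note e1 = est(1)[OF Pb Mb M0 rr h k] and e2 = est(2)[OF Pb Mb M0 rr h k]
  show "summable (form_part1 ip \<Phi> h k)" "summable (form_part2 ip \<Phi> h k)" using e1 e2 by auto
  have "norm (phi_form ip \<Phi> h k) \<le> norm (\<Sum>v. form_part1 ip \<Phi> h k v) + norm (\<Sum>v. form_part2 ip \<Phi> h k v)"
    unfolding phi_form_def by (rule norm_triangle_ineq)
  also have "\<dots> \<le> 2 * ((M * H * G) * ((1 / (1 - r^2)) * (1 / (1 - r / t))))" using e1 e2 by linarith
  also have "\<dots> = K * H * G" unfolding K by (simp add: ac_simps)
  finally show "norm (phi_form ip \<Phi> h k) \<le> K * H * G" .
qed

lemma fp1_add1: "form_part1 ip \<Phi> (\<lambda>j. h j + a j) k v = form_part1 ip \<Phi> h k v + form_part1 ip \<Phi> a k v"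
  unfolding form_part1_def by (simp add: qb_add[OF Pb[rule_format]] ip_add1 sum.distrib)
lemma fp1_add2: "form_part1 ip \<Phi> h (\<lambda>j. k j + b j) v = form_part1 ip \<Phi> h k v + form_part1 ip \<Phi> h b v"
  unfolding form_part1_def by (simp add: ip_add2 sum.distrib)
lemma fp2_add1: "form_part2 ip \<Phi> (\<lambda>j. h j + a j) k v = form_part2 ip \<Phi> h k v + form_part2 ip \<Phi> a k v"
  unfolding form_part2_alt[OF Pb] by (simp add: ip_add2 qcnj_add sum.distrib)
lemma fp2_add2: "form_part2 ip \<Phi> h (\<lambda>j. k j + b j) v = form_part2 ip \<Phi> h k v + form_part2 ip \<Phi> h b v"
  unfolding form_part2_alt[OF Pb] by (simp add: qb_add[OF Pb[rule_format]] ip_add1 qcnj_add sum.distrib)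

lemma phi_add1:
  assumes "pb r h H" "pb r a A" "pb r k G"
  shows "phi_form ip \<Phi> (\<lambda>j. h j + a j) k = phi_form ip \<Phi> h k + phi_form ip \<Phi> a k"
proof -
  have e1: "form_part1 ip \<Phi> (\<lambda>j. h j + a j) k = (\<lambda>v. form_part1 ip \<Phi> h k v + form_part1 ip \<Phi> a k v)"
    by (rule ext) (rule fp1_add1)
  have e2: "form_part2 ip \<Phi> (\<lambda>j. h j + a j) k = (\<lambda>v. form_part2 ip \<Phi> h k v + form_part2 ip \<Phi> a k v)"
    by (rule ext) (rule fp2_add1)
  have "(\<Sum>v. form_part1 ip \<Phi> h k v + form_part1 ip \<Phi> a k v) = (\<Sum>v. form_part1 ip \<Phi> h k v) + (\<Sum>v. form_part1 ip \<Phi> a k v)"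
    by (rule suminf_add[symmetric]) (use est2 assms in auto)
  moreover have "(\<Sum>v. form_part2 ip \<Phi> h k v + form_part2 ip \<Phi> a k v) = (\<Sum>v. form_part2 ip \<Phi> h k v) + (\<Sum>v. form_part2 ip \<Phi> a k v)"
    by (rule suminf_add[symmetric]) (use est2 assms in auto)
  ultimately show ?thesis unfolding phi_form_def e1 e2 by (simp add: ac_simps)
qed

lemma phi_add2:
  assumes "pb r h H" "pb r k G" "pb r b B"
  shows "phi_form ip \<Phi> h (\<lambda>j. k j + b j) = phi_form ip \<Phi> h k + phi_form ip \<Phi> h b"
proof -
  have e1: "form_part1 ip \<Phi> h (\<lambda>j. k j + b j) = (\<lambda>v. form_part1 ip \<Phi> h k v + form_part1 ip \<Phi> h b v)"
    by (rule ext) (rule fp1_add2)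
  have e2: "form_part2 ip \<Phi> h (\<lambda>j. k j + b j) = (\<lambda>v. form_part2 ip \<Phi> h k v + form_part2 ip \<Phi> h b v)"
    by (rule ext) (rule fp2_add2)
  have "(\<Sum>v. form_part1 ip \<Phi> h k v + form_part1 ip \<Phi> h b v) = (\<Sum>v. form_part1 ip \<Phi> h k v) + (\<Sum>v. form_part1 ip \<Phi> h b v)"
    by (rule suminf_add[symmetric]) (use est2 assms in auto)
  moreover have "(\<Sum>v. form_part2 ip \<Phi> h k v + form_part2 ip \<Phi> h b v) = (\<Sum>v. form_part2 ip \<Phi> h k v) + (\<Sum>v. form_part2 ip \<Phi> h b v)"
    by (rule suminf_add[symmetric]) (use est2 assms in auto)
  ultimately show ?thesis unfolding phi_form_def e1 e2 by (simp add: ac_simps)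
qed

lemma cont_bound:
  assumes f: "pb r f F" and a: "pb r a A" and g: "pb r g G" and b: "pb r b B"
  shows "norm (phi_form ip \<Phi> (\<lambda>j. f j + a j) (\<lambda>j. g j + b j) - phi_form ip \<Phi> f g) \<le> K * (F * B + A * G + A * B)"
proof -
  have gb: "pb r (\<lambda>j. g j + b j) (G + B)" by (rule pb_add[OF g b])
  have "phi_form ip \<Phi> (\<lambda>j. f j + a j) (\<lambda>j. g j + b j)
      = phi_form ip \<Phi> f (\<lambda>j. g j + b j) + phi_form ip \<Phi> a (\<lambda>j. g j + b j)"
    by (rule phi_add1[OF f a gb])
  also have "\<dots> = (phi_form ip \<Phi> f g + phi_form ip \<Phi> f b) + (phi_form ip \<Phi> a g + phi_form ip \<Phi> a b)"
    using phi_add2[OF f g b] phi_add2[OF a g b] by simp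
  finally have "phi_form ip \<Phi> (\<lambda>j. f j + a j) (\<lambda>j. g j + b j) - phi_form ip \<Phi> f g
      = phi_form ip \<Phi> f b + phi_form ip \<Phi> a g + phi_form ip \<Phi> a b" by (simp add: algebra_simps)
  then have "norm (phi_form ip \<Phi> (\<lambda>j. f j + a j) (\<lambda>j. g j + b j) - phi_form ip \<Phi> f g)
      \<le> norm (phi_form ip \<Phi> f b) + norm (phi_form ip \<Phi> a g) + norm (phi_form ip \<Phi> a b)"
    by (simp only:) (rule order_trans[OF norm_triangle_ineq add_right_mono[OF norm_triangle_ineq]])
  also have "\<dots> \<le> K * F * B + K * A * G + K * A * B"
    using est2(3)[OF f b] est2(3)[OF a g] est2(3)[OF a b] by linarith
  finally show ?thesis by (simp add: algebra_simps)
qed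

end
end

theorem proposition6p2:
  fixes lm rm :: "quat \<Rightarrow> 'c::ab_group_add \<Rightarrow> 'c"
    and ip :: "'c \<Rightarrow> 'c \<Rightarrow> quat"
    and \<Phi> :: "nat \<Rightarrow> 'c \<Rightarrow> 'c"
    and r r0 R :: real
  assumes hilb: "two_sided_qhilbert lm rm ip"
    and ip_lm: "\<forall>c d q. ip c (lm q d) = ip (lm (qcnj q) c) d"
    and r: "0 < r" "r < r0" "r0 < 1" "R = 1 / r"
    and coeffs: "\<forall>u. qbounded_op rm ip (\<Phi> u)"
    and Phi: "\<exists>\<Psi> :: quat \<Rightarrow> 'c \<Rightarrow> 'c.
       (\<forall>p. norm p \<le> r0 \<longrightarrow> qbounded_op rm ip (\<Psi> p)) \<and>
       (\<forall>p. norm p < r0 \<longrightarrow>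
          (\<lambda>N. opnorm ip (\<lambda>c. \<Psi> p c - (\<Sum>u<N. lm (qpow p u) (\<Phi> u c)))) \<longlonglongrightarrow> 0) \<and>
       (\<forall>p. norm p \<le> r0 \<longrightarrow> (\<forall>\<epsilon>>0. \<exists>\<delta>>0. \<forall>p'. norm p' \<le> r0 \<and> norm (p' - p) < \<delta> \<longrightarrow>
          opnorm ip (\<lambda>c. \<Psi> p' c - \<Psi> p c) < \<epsilon>))"
  shows "(\<forall>f\<in>l2r ip R. \<forall>g\<in>l2r ip R.
            summable (form_part1 ip \<Phi> f g) \<and> summable (form_part2 ip \<Phi> f g)) \<and>
         (\<forall>f\<in>l2r ip R. \<forall>g\<in>l2r ip R. \<forall>\<epsilon>>0. \<exists>\<delta>>0. \<forall>f'\<in>l2r ip R. \<forall>g'\<in>l2r ip R.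
            l2r_norm ip R (f' - f) < \<delta> \<and> l2r_norm ip R (g' - g) < \<delta> \<longrightarrow>
            norm (phi_form ip \<Phi> f' g' - phi_form ip \<Phi> f g) < \<epsilon>)"
proof -
  interpret qh lm rm ip by unfold_locales (rule hilb)
  obtain \<Psi> :: "quat \<Rightarrow> 'c \<Rightarrow> 'c" where
    P1: "\<And>p. norm p \<le> r0 \<Longrightarrow> qbounded_op rm ip (\<Psi> p)" and
    P2: "\<And>p. norm p < r0 \<Longrightarrow> (\<lambda>N. opnorm ip (\<lambda>c. \<Psi> p c - (\<Sum>u<N. lm (qpow p u) (\<Phi> u c)))) \<longlonglongrightarrow> 0"
    using Phi by blast
  define t where "t = (r + r0) / 2"
  have t: "r < t" "t < r0" "0 < t" "t < 1" using r unfolding t_def by auto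
  have np: "norm (qreal t) = t" using t by simp
  have PB: "qbounded_op rm ip (\<Psi> (qreal t))" using P1[of "qreal t"] np t by simp
  have conv: "(\<lambda>N. opnorm ip (\<lambda>c. \<Psi> (qreal t) c - (\<Sum>u<N. lm (qpow (qreal t) u) (\<Phi> u c)))) \<longlonglongrightarrow> 0"
    using P2[of "qreal t"] np t by simp
  obtain M where M0: "M \<ge> 0" and Mb: "\<And>k c. cnorm ip (\<Phi> k c) \<le> M * (1 / t)^k * cnorm ip c"
    using coeff_bound[OF coeffs PB t(3) conv] by blast
  have r1: "r < 1" using r by linarith
  define K where "K = 2 * (M * ((1 / (1 - r^2)) * (1 / (1 - r / t))))"
  note ctx = coeffs Mb M0 r(1) t(1) r1 K_def
  have K0: "K \<ge> 0" by (rule K0[OF ctx])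
  have R0: "R > 0" using r by simp
  have pbl: "pb r h (l2r_norm ip R h)" if "h \<in> l2r ip R" for h
  proof -
    have "h \<in> l2r ip (1 / r)" using that r(4) by simp
    then show ?thesis using l2r_pb[OF r(1), of h] r(4) by simp
  qed
  have part1: "\<forall>f\<in>l2r ip R. \<forall>g\<in>l2r ip R.
            summable (form_part1 ip \<Phi> f g) \<and> summable (form_part2 ip \<Phi> f g)"
  proof (intro ballI conjI)
    fix f g assume f: "f \<in> l2r ip R" and g: "g \<in> l2r ip R"
    show "summable (form_part1 ip \<Phi> f g)" by (rule est2(1)[OF ctx pbl[OF f] pbl[OF g]])
    show "summable (form_part2 ip \<Phi> f g)" by (rule est2(2)[OF ctx pbl[OF f] pbl[OF g]])
  qed
  have part2: "\<exists>\<delta>>0. \<forall>f'\<in>l2r ip R. \<forall>g'\<in>l2r ip R.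
            l2r_norm ip R (f' - f) < \<delta> \<and> l2r_norm ip R (g' - g) < \<delta> \<longrightarrow>
            norm (phi_form ip \<Phi> f' g' - phi_form ip \<Phi> f g) < \<epsilon>"
    if f: "f \<in> l2r ip R" and g: "g \<in> l2r ip R" and e: "\<epsilon> > 0" for f g \<epsilon>
  proof -
    define F where "F = l2r_norm ip R f"
    define G where "G = l2r_norm ip R g"
    have F0: "F \<ge> 0" "G \<ge> 0" unfolding F_def G_def using l2r_nonneg f g by auto
    define X where "X = K * (F + G + 1)"
    have X0: "X \<ge> 0" unfolding X_def using K0 F0 by simp
    define \<delta> where "\<delta> = min 1 (\<epsilon> / (X + 1))"
    have d0: "\<delta> > 0" unfolding \<delta>_def using e X0 by simp
    have d1: "\<delta> \<le> 1" unfolding \<delta>_def by simp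
    have "\<delta> \<le> \<epsilon> / (X + 1)" unfolding \<delta>_def by simp
    then have dX: "\<delta> * (X + 1) \<le> \<epsilon>" using X0 by (simp add: le_divide_eq)
    have "norm (phi_form ip \<Phi> f' g' - phi_form ip \<Phi> f g) < \<epsilon>"
      if f': "f' \<in> l2r ip R" and g': "g' \<in> l2r ip R"
        and df: "l2r_norm ip R (f' - f) < \<delta>" and dg: "l2r_norm ip R (g' - g) < \<delta>" for f' g'
    proof -
      define a where "a = f' - f"
      define b where "b = g' - g"
      define A where "A = l2r_norm ip R a"
      define B where "B = l2r_norm ip R b"
      have aL: "a \<in> l2r ip R" unfolding a_def by (rule l2r_diff[OF R0 f' f])
      have bL: "b \<in> l2r ip R" unfolding b_def by (rule l2r_diff[OF R0 g' g])
      have A0: "A \<ge> 0" "B \<ge> 0" unfolding A_def B_def using l2r_nonneg aL bL by auto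
      have Ad: "A < \<delta>" "B < \<delta>" using df dg unfolding A_def B_def a_def b_def by auto
      have ff: "f' = (\<lambda>j. f j + a j)" unfolding a_def by (rule ext) simp
      have gg: "g' = (\<lambda>j. g j + b j)" unfolding b_def by (rule ext) simp
      have "norm (phi_form ip \<Phi> f' g' - phi_form ip \<Phi> f g) \<le> K * (F * B + A * G + A * B)"
        unfolding ff gg F_def G_def A_def B_def
        by (rule cont_bound[OF ctx pbl[OF f] pbl[OF aL] pbl[OF g] pbl[OF bL]])
      also have "\<dots> \<le> K * (F * \<delta> + \<delta> * G + \<delta> * 1)"
      proof (rule mult_left_mono[OF _ K0])
        have "F * B \<le> F * \<delta>" using Ad F0 by (intro mult_left_mono) auto
        moreover have "A * G \<le> \<delta> * G" using Ad F0 by (intro mult_right_mono) auto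
        moreover have "A * B \<le> \<delta> * 1" using Ad A0 d1 by (intro mult_mono) auto
        ultimately show "F * B + A * G + A * B \<le> F * \<delta> + \<delta> * G + \<delta> * 1" by linarith
      qed
      also have "\<dots> = \<delta> * X" unfolding X_def by (simp add: algebra_simps)
      also have "\<dots> < \<delta> * (X + 1)" using d0 by simp
      also have "\<dots> \<le> \<epsilon>" by (rule dX)
      finally show ?thesis .
    qed
    then show ?thesis using d0 by blast
  qed
  show ?thesis using part1 part2 by blast
qed


end
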